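(* Let $M\ge1$, $S=\{0,1,2,\dots\}^M$, $N(n)=\{u\in\{-1,0,1\}^M: n+u\in S\}$, and let $P$ be the transition matrix of a discrete-time random walk $R$ on $S$ with $P(n,n')>0$ only if $n'-n\in N(n)$, homogeneous with respect to a partition $C=\{C_k\}_{k\in K}$ of $S$ (index function $c$), and let $Z=\{Z_j\}_{j\in J}$ be a refinement of $C$ (index function $z$), all as in the context. Consider the optimization problem in the variables $\varphi_{j,u,d,v}$, indexed by $j\in J$, $u\in N_j$, $d\in N_{j,u}$, $v\in N_{c(j,d)}$: $$\min \sum_{j\in J}\sum_{u\in N_j}\sum_{d\in N_{j,u}}\sum_{v\in N_{c(j,d)}}\varphi_{j,u,d,v}$$ subject to, for all $j\in J$, $u\in N_j$, $d\in N_{j,u}$, $$\sum_{v\in N_{c(j,d)}}\mathbf{1}(d+v\in N_{j,u})\bigl[\varphi_{j,u,d+v,-v}-\varphi_{j,u,d,v}\bigr]=p_{c(j,u),d-u}-p_{j,d},$$ and $\varphi_{j,u,d,v}\ge 0$ for all indices. Then this problem has a finite number of variables and constraints and is feasible. Moreover, if $(\varphi_{j,u,d,v})$ is an optimal solution, then the numbers defined for $n,m\in S$, $u\in N_{c(n)}$, $v\in N_{c(m)}$ by $$\phi(n,u,m,v)=\begin{cases}\varphi_{z(n),u,m-n,v}, & \text{if } m-n\in N_{z(n),u}\text{ and } m+v-n\in N_{z(n),u},\\ 0, &\text{otherwise},\end{cases}$$ are nonnegative and satisfy, for all $n,m\in S$ and $u\in N_{c(n)}$, $$\sum_{v\in 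N_{c(m)}}\bigl[\phi(n,u,m+v,-v)-\phi(n,u,m,v)\bigr]=P(n+u,m)-P(n,m).$$
   Context: A family $C=\{C_k\}_{k\in K}$, with $K$ finite, is a partition of $S$ if its sets are pairwise disjoint, cover $S$, and $N(n)=N(n')$ for all $n,n'$ in the same $C_k$; this common set is denoted $N_k$, and $c(n)$ denotes the index $k$ with $n\in C_k$. The random walk $R$ is homogeneous with respect to $C$: $P(n,n+u)=p_{c(n),u}$ for $u\in N_{c(n)}$, depending on $n$ only through $c(n)$, and $P(n,n')=0$ if $n'-n\notin N(n)$. A refinement $Z=\{Z_j\}_{j\in J}$ of $C$ is a partition of $S$ in the same sense, with finite index set $J$, index function $z$ and common transition sets $N_j$, such that for every $j\in J$ and $u\in N_j$, $c(n+u)$ is the same for all $n\in Z_j$; this common index is denoted $c(j,u)$. $R$ is then also homogeneous with respect to $Z$, and $p_{j,d}$ denotes $P(n,n+d)$ for $n\in Z_j$ (equal to $0$ if $d\notin N_j$). For $j\in J$, $u\in N_j$, let $N_{j,u}=N_j\cup(u+N_{c(j,u)})$. It is assumed (as presupposed by the notation) that for $d\in N_{j,u}$ the index $c(n+d)$ is the same for all $n\in Z_j$; it is denoted $c(j,d)$. Finally $p_{c(j,u),d-u}$ denotes $P(n+u,n+d)$ for $n\in Z_j$ (equal to $0$ if $d-u\notin N_{c(j,u)}$). *)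

theory Defs
  imports "HOL-Analysis.Analysis"
begin

text \<open>Lattice points are vectors of integers indexed by a finite type 'm (so M = CARD('m) >= 1).\<close>

definition Sgrid :: "(int^'m) set" where
  "Sgrid = {n. \<forall>i. 0 \<le> n $ i}"

definition Nb :: "int^'m \<Rightarrow> (int^'m) set" where
  "Nb n = {u. (\<forall>i. u $ i \<in> {-1, 0, 1}) \<and> n + u \<in> Sgrid}"

text \<open>A partition of S with finite index set K, given through its index function c:
  the block C_k is {n in S. c n = k}; blocks are nonempty (c maps S onto K),
  and N is constant on each block.\<close>
definition is_partition :: "'k set \<Rightarrow> (int^'m \<Rightarrow> 'k) \<Rightarrow> bool" where
  "is_partition K c \<longleftrightarrow> finite K \<and> c ` Sgrid = K \<and>
     (\<forall>n\<in>Sgrid. \<forall>n'\<in>Sgrid. c n = c n' \<longrightarrow> Nb n = Nb n')"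

definition transition_matrix :: "(int^'m \<Rightarrow> int^'m \<Rightarrow> real) \<Rightarrow> bool" where
  "transition_matrix P \<longleftrightarrow> (\<forall>n\<in>Sgrid.
     (\<forall>n'. 0 \<le> P n n') \<and> (\<forall>n'. n' - n \<notin> Nb n \<longrightarrow> P n n' = 0) \<and>
     (\<Sum>u\<in>Nb n. P n (n + u)) = 1)"

definition homogeneous :: "(int^'m \<Rightarrow> int^'m \<Rightarrow> real) \<Rightarrow> (int^'m \<Rightarrow> 'k) \<Rightarrow> bool" where
  "homogeneous P c \<longleftrightarrow> (\<forall>n\<in>Sgrid. \<forall>n'\<in>Sgrid. c n = c n' \<longrightarrow>
     (\<forall>u\<in>Nb n. P n (n + u) = P n' (n' + u)))"

definition is_refinement :: "(int^'m \<Rightarrow> 'k) \<Rightarrow> 'j set \<Rightarrow> (int^'m \<Rightarrow> 'j) \<Rightarrow> bool" where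
  "is_refinement c J z \<longleftrightarrow> is_partition J z \<and>
     (\<forall>n\<in>Sgrid. \<forall>n'\<in>Sgrid. z n = z n' \<longrightarrow> (\<forall>u\<in>Nb n. c (n + u) = c (n' + u)))"

text \<open>The standing assumption: for d in N_{j,u} = N_j \<union> (u + N_{c(j,u)}), c(n+d) is constant on Z_j.\<close>
definition refinement_coherent :: "(int^'m \<Rightarrow> 'k) \<Rightarrow> (int^'m \<Rightarrow> 'j) \<Rightarrow> bool" where
  "refinement_coherent c z \<longleftrightarrow> (\<forall>n\<in>Sgrid. \<forall>n'\<in>Sgrid. z n = z n' \<longrightarrow>
     (\<forall>u\<in>Nb n. \<forall>d\<in>Nb n \<union> (\<lambda>w. u + w) ` Nb (n + u). c (n + d) = c (n' + d)))"

definition rep :: "(int^'m \<Rightarrow> 'j) \<Rightarrow> 'j \<Rightarrow> int^'m" where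
  "rep z j = (SOME n. n \<in> Sgrid \<and> z n = j)"

definition Njd :: "(int^'m \<Rightarrow> 'j) \<Rightarrow> 'j \<Rightarrow> int^'m \<Rightarrow> (int^'m) set" where
  "Njd z j u = Nb (rep z j) \<union> (\<lambda>w. u + w) ` Nb (rep z j + u)"

definition lp_vars :: "(int^'m \<Rightarrow> 'j) \<Rightarrow> 'j set \<Rightarrow> ('j \<times> (int^'m) \<times> (int^'m) \<times> (int^'m)) set" where
  "lp_vars z J = {(j, u, d, v). j \<in> J \<and> u \<in> Nb (rep z j) \<and> d \<in> Njd z j u \<and> v \<in> Nb (rep z j + d)}"

definition lp_constraints :: "(int^'m \<Rightarrow> 'j) \<Rightarrow> 'j set \<Rightarrow> ('j \<times> (int^'m) \<times> (int^'m)) set" where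
  "lp_constraints z J = {(j, u, d). j \<in> J \<and> u \<in> Nb (rep z j) \<and> d \<in> Njd z j u}"

definition lp_objective :: "(int^'m \<Rightarrow> 'j) \<Rightarrow> 'j set
    \<Rightarrow> ('j \<Rightarrow> int^'m \<Rightarrow> int^'m \<Rightarrow> int^'m \<Rightarrow> real) \<Rightarrow> real" where
  "lp_objective z J \<phi> = (\<Sum>j\<in>J. \<Sum>u\<in>Nb (rep z j). \<Sum>d\<in>Njd z j u. \<Sum>v\<in>Nb (rep z j + d). \<phi> j u d v)"

text \<open>Feasibility. Here p_{c(j,u),d-u} = P(n+u, n+d) and p_{j,d} = P(n, n+d) for n in Z_j.\<close>
definition lp_feasible :: "(int^'m \<Rightarrow> int^'m \<Rightarrow> real) \<Rightarrow> (int^'m \<Rightarrow> 'j) \<Rightarrow> 'j set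
    \<Rightarrow> ('j \<Rightarrow> int^'m \<Rightarrow> int^'m \<Rightarrow> int^'m \<Rightarrow> real) \<Rightarrow> bool" where
  "lp_feasible P z J \<phi> \<longleftrightarrow>
     (\<forall>(j, u, d, v) \<in> lp_vars z J. 0 \<le> \<phi> j u d v) \<and>
     (\<forall>(j, u, d) \<in> lp_constraints z J.
        (\<Sum>v\<in>Nb (rep z j + d). (if d + v \<in> Njd z j u then 1 else 0) *
            (\<phi> j u (d + v) (- v) - \<phi> j u d v))
        = P (rep z j + u) (rep z j + d) - P (rep z j) (rep z j + d))"

definition lp_optimal :: "(int^'m \<Rightarrow> int^'m \<Rightarrow> real) \<Rightarrow> (int^'m \<Rightarrow> 'j) \<Rightarrow> 'j set
    \<Rightarrow> ('j \<Rightarrow> int^'m \<Rightarrow> int^'m \<Rightarrow> int^'m \<Rightarrow> real) \<Rightarrow> bool" where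
  "lp_optimal P z J \<phi> \<longleftrightarrow> lp_feasible P z J \<phi> \<and>
     (\<forall>\<psi>. lp_feasible P z J \<psi> \<longrightarrow> lp_objective z J \<phi> \<le> lp_objective z J \<psi>)"

definition phi_of :: "(int^'m \<Rightarrow> 'j) \<Rightarrow> ('j \<Rightarrow> int^'m \<Rightarrow> int^'m \<Rightarrow> int^'m \<Rightarrow> real)
    \<Rightarrow> int^'m \<Rightarrow> int^'m \<Rightarrow> int^'m \<Rightarrow> int^'m \<Rightarrow> real" where
  "phi_of z \<phi> n u m v =
     (if m - n \<in> Njd z (z n) u \<and> m + v - n \<in> Njd z (z n) u
      then \<phi> (z n) u (m - n) v else 0)"

end

theory Submission
  imports Defs
begin


definition unitbox :: "(int^'m) set" where
  "unitbox = {u. \<forall>i. u $ i \<in> {-1, 0, 1}}"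

lemma finite_unitbox: "finite (unitbox :: (int^'m) set)"
proof -
  have "finite {f::'m \<Rightarrow> int. \<forall>x. (x \<in> UNIV \<longrightarrow> f x \<in> {-1,0,1}) \<and> (x \<notin> UNIV \<longrightarrow> f x = 0)}"
    by (rule finite_set_of_finite_funs) auto
  then have "finite (vec_nth -` {f::'m \<Rightarrow> int. \<forall>x. (x \<in> UNIV \<longrightarrow> f x \<in> {-1,0,1}) \<and> (x \<notin> UNIV \<longrightarrow> f x = 0)})"
    by (rule finite_vimageI) (auto simp: inj_def vec_eq_iff)
  moreover have "unitbox = vec_nth -` {f::'m \<Rightarrow> int. \<forall>x. (x \<in> UNIV \<longrightarrow> f x \<in> {-1,0,1}) \<and> (x \<notin> UNIV \<longrightarrow> f x = 0)}"
    unfolding unitbox_def by auto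
  ultimately show ?thesis by simp
qed

lemma Nb_sub: "Nb n \<subseteq> unitbox"
  unfolding Nb_def unitbox_def by auto

lemma finite_Nb: "finite (Nb n)"
  using finite_subset[OF Nb_sub finite_unitbox] .

lemma zero_Nb: "n \<in> Sgrid \<Longrightarrow> 0 \<in> Nb n"
  unfolding Nb_def by auto

lemma Nb_S: "u \<in> Nb n \<Longrightarrow> n + u \<in> Sgrid"
  unfolding Nb_def by auto


lemma neg_Nb': "n \<in> Sgrid \<Longrightarrow> w \<in> Nb n \<Longrightarrow> - w \<in> Nb (n + w)"
  unfolding Nb_def by auto

definition Fl :: "int^'m \<Rightarrow> (int^'m) set \<Rightarrow> (int^'m \<Rightarrow> int^'m \<Rightarrow> real) \<Rightarrow> int^'m \<Rightarrow> real" where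
  "Fl r D \<psi> d = (\<Sum>v\<in>Nb (r+d). (if d+v \<in> D then 1 else 0) * (\<psi> (d+v) (-v) - \<psi> d v))"

lemma Fl_add: "Fl r D (\<lambda>d v. \<psi>1 d v + \<psi>2 d v) d = Fl r D \<psi>1 d + Fl r D \<psi>2 d"
  unfolding Fl_def by (simp add: sum.distrib[symmetric] algebra_simps)

lemma Fl_scale: "Fl r D (\<lambda>d v. k * \<psi> d v) d = k * Fl r D \<psi> d"
  unfolding Fl_def by (simp add: sum_distrib_left algebra_simps)

lemma Fl_sum: "finite I \<Longrightarrow> Fl r D (\<lambda>d v. \<Sum>i\<in>I. \<psi> i d v) d = (\<Sum>i\<in>I. Fl r D (\<psi> i) d)"
proof (induction I rule: finite_induct)
  case empty
  then show ?case by (simp add: Fl_def)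
next
  case (insert x F)
  then show ?case by (simp add: Fl_add)
qed

definition edge :: "int^'m \<Rightarrow> int^'m \<Rightarrow> int^'m \<Rightarrow> int^'m \<Rightarrow> real" where
  "edge a w = (\<lambda>d v. if d = a \<and> v = w then 1 else 0)"

lemma Fl_edge:
  assumes ra: "r + a \<in> Sgrid" and aD: "a \<in> D" and awD: "a + w \<in> D" and w: "w \<in> Nb (r + a)"
  shows "Fl r D (edge a w) d = (if d = a + w then 1 else 0) - (if d = a then 1 else 0)"
proof -
  have "Fl r D (edge a w) d = (\<Sum>v\<in>Nb (r+d). (if v = - w then (if d = a + w then 1 else 0) else 0::real))
     - (\<Sum>v\<in>Nb (r+d). (if v = w then (if d = a then 1 else 0) else 0::real))"
    unfolding Fl_def sum_subtractf[symmetric]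
  proof (rule sum.cong[OF refl])
    fix v
    have e1: "(d + v = a \<and> - v = w) \<longleftrightarrow> (v = - w \<and> d = a + w)"
      by (metis add_diff_cancel_right' diff_minus_eq_add minus_minus)
    show "(if d + v \<in> D then 1 else 0) * (edge a w (d + v) (- v) - edge a w d v) =
      (if v = - w then if d = a + w then 1 else 0 else 0) - (if v = w then if d = a then 1 else 0 else 0)"
      unfolding edge_def using aD awD e1 by auto
  qed
  also have "(\<Sum>v\<in>Nb (r+d). (if v = - w then (if d = a + w then 1 else 0) else 0::real)) = (if d = a + w then 1 else 0)"
  proof (cases "d = a + w")
    case True
    have "- w \<in> Nb (r + d)" using True neg_Nb'[OF ra w] by (simp add: add.assoc)
    then show ?thesis using True by (simp add: sum.delta finite_Nb)
  qed simp
  also have "(\<Sum>v\<in>Nb (r+d). (if v = w then (if d = a then 1 else 0) else 0::real)) = (if d = a then 1 else 0)"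
    using w by (simp add: sum.delta finite_Nb)
  finally show ?thesis .
qed

lemma tm_zero: "transition_matrix P \<Longrightarrow> x \<in> Sgrid \<Longrightarrow> y - x \<notin> Nb x \<Longrightarrow> P x y = 0"
  unfolding transition_matrix_def by auto

lemma tm_nonneg: "transition_matrix P \<Longrightarrow> x \<in> Sgrid \<Longrightarrow> 0 \<le> P x y"
  unfolding transition_matrix_def by auto

lemma tm_sum: "transition_matrix P \<Longrightarrow> x \<in> Sgrid \<Longrightarrow> (\<Sum>a\<in>Nb x. P x (x + a)) = 1"
  unfolding transition_matrix_def by auto

lemma sum_lin:
  "(\<Sum>a\<in>A. (f a::real) * ((if p then 1 else 0) - (if q a then 1 else 0)))
     = (if p then 1 else 0) * sum f A - (\<Sum>a\<in>A. if q a then f a else 0)"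
proof -
  have "(\<Sum>a\<in>A. (f a::real) * ((if p then 1 else 0) - (if q a then 1 else 0)))
     = (\<Sum>a\<in>A. f a * (if p then 1 else 0) - (if q a then f a else 0))"
    by (rule sum.cong[OF refl]) (simp add: right_diff_distrib)
  also have "\<dots> = (\<Sum>a\<in>A. f a * (if p then 1 else 0)) - (\<Sum>a\<in>A. if q a then f a else 0)"
    by (rule sum_subtractf)
  also have "(\<Sum>a\<in>A. f a * (if p then 1 else 0)) = (if p then 1 else 0) * sum f A"
    by (simp only: sum_distrib_right[symmetric] mult.commute[of "sum f A"])
  finally show ?thesis .
qed

lemma sum_lin2:
  "(\<Sum>a\<in>A. (f a::real) * ((if q a then 1 else 0) - (if p then 1 else 0)))
     = (\<Sum>a\<in>A. if q a then f a else 0) - (if p then 1 else 0) * sum f A"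
proof -
  have "(\<Sum>a\<in>A. (f a::real) * ((if q a then 1 else 0) - (if p then 1 else 0)))
     = (\<Sum>a\<in>A. (if q a then f a else 0) - f a * (if p then 1 else 0))"
    by (rule sum.cong[OF refl]) (simp add: right_diff_distrib)
  also have "\<dots> = (\<Sum>a\<in>A. if q a then f a else 0) - (\<Sum>a\<in>A. f a * (if p then 1 else 0))"
    by (rule sum_subtractf)
  also have "(\<Sum>a\<in>A. f a * (if p then 1 else 0)) = (if p then 1 else 0) * sum f A"
    by (simp only: sum_distrib_right[symmetric] mult.commute[of "sum f A"])
  finally show ?thesis .
qed

definition wit :: "(int^'m \<Rightarrow> int^'m \<Rightarrow> real) \<Rightarrow> int^'m \<Rightarrow> int^'m \<Rightarrow> int^'m \<Rightarrow> int^'m \<Rightarrow> real" where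
  "wit P r u = (\<lambda>d v. (\<Sum>a\<in>Nb r. P r (r+a) * edge a (-a) d v) + edge 0 u d v
      + (\<Sum>w\<in>Nb (r+u). P (r+u) (r+u+w) * edge u w d v))"

lemma wit_nonneg: "transition_matrix P \<Longrightarrow> r \<in> Sgrid \<Longrightarrow> u \<in> Nb r \<Longrightarrow> 0 \<le> wit P r u d v"
proof -
  assume tm: "transition_matrix P" and r: "r \<in> Sgrid" and u: "u \<in> Nb r"
  have ru: "r + u \<in> Sgrid" using u by (rule Nb_S)
  have e: "\<And>a w. 0 \<le> edge a w d v" unfolding edge_def by simp
  have 1: "0 \<le> (\<Sum>a\<in>Nb r. P r (r+a) * edge a (-a) d v)"
    by (rule sum_nonneg, rule mult_nonneg_nonneg, rule tm_nonneg[OF tm r], rule e)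
  have 2: "0 \<le> (\<Sum>w\<in>Nb (r+u). P (r+u) (r+u+w) * edge u w d v)"
    by (rule sum_nonneg, rule mult_nonneg_nonneg, rule tm_nonneg[OF tm ru], rule e)
  show ?thesis unfolding wit_def using 1 2 e[of 0 u] by linarith
qed

lemma wit_flow:
  assumes tm: "transition_matrix P" and r: "r \<in> Sgrid" and u: "u \<in> Nb r"
    and D: "D = Nb r \<union> (\<lambda>w. u + w) ` Nb (r + u)"
  shows "Fl r D (wit P r u) d = P (r+u) (r+d) - P r (r+d)"
proof -
  have ru: "r + u \<in> Sgrid" using u by (rule Nb_S)
  have S1: "Fl r D (\<lambda>d v. \<Sum>a\<in>Nb r. P r (r+a) * edge a (-a) d v) d = (if d = 0 then 1 else 0) - P r (r+d)"
  proof -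
    have "Fl r D (\<lambda>d v. \<Sum>a\<in>Nb r. P r (r+a) * edge a (-a) d v) d
        = (\<Sum>a\<in>Nb r. P r (r+a) * Fl r D (edge a (-a)) d)"
      by (simp add: Fl_sum finite_Nb Fl_scale)
    also have "\<dots> = (\<Sum>a\<in>Nb r. P r (r+a) * ((if d = 0 then 1 else 0) - (if d = a then 1 else 0)))"
    proof (rule sum.cong[OF refl])
      fix a assume a: "a \<in> Nb r"
      have "Fl r D (edge a (-a)) d = (if d = a + - a then 1 else 0) - (if d = a then 1 else 0)"
      proof (rule Fl_edge)
        show "r + a \<in> Sgrid" using a by (rule Nb_S)
        show "a \<in> D" using a D by simp
        show "a + - a \<in> D" using zero_Nb[OF r] D by simp
        show "- a \<in> Nb (r + a)" using neg_Nb'[OF r a] .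
      qed
      then show "P r (r+a) * Fl r D (edge a (-a)) d = P r (r+a) * ((if d = 0 then 1 else 0) - (if d = a then 1 else 0))"
        by simp
    qed
    also have "\<dots> = (if d = 0 then 1 else 0) * (\<Sum>a\<in>Nb r. P r (r+a)) - (\<Sum>a\<in>Nb r. if d = a then P r (r+a) else 0)"
      by (rule sum_lin)
    also have "\<dots> = (if d = 0 then 1 else 0) - P r (r+d)"
      using tm_sum[OF tm r] tm_zero[OF tm r, of "r+d"] by (simp add: sum.delta' finite_Nb)
    finally show ?thesis .
  qed
  have S2: "Fl r D (edge 0 u) d = (if d = u then 1 else 0) - (if d = 0 then 1 else 0)"
    using Fl_edge[of r 0 D u d] r u D zero_Nb[OF r] by simp
  have S3: "Fl r D (\<lambda>d v. \<Sum>w\<in>Nb (r+u). P (r+u) (r+u+w) * edge u w d v) d = P (r+u) (r+d) - (if d = u then 1 else 0)"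
  proof -
    have "Fl r D (\<lambda>d v. \<Sum>w\<in>Nb (r+u). P (r+u) (r+u+w) * edge u w d v) d
        = (\<Sum>w\<in>Nb (r+u). P (r+u) (r+u+w) * Fl r D (edge u w) d)"
      by (simp add: Fl_sum finite_Nb Fl_scale)
    also have "\<dots> = (\<Sum>w\<in>Nb (r+u). P (r+u) (r+u+w) * ((if d = u + w then 1 else 0) - (if d = u then 1 else 0)))"
    proof (rule sum.cong[OF refl])
      fix w assume w: "w \<in> Nb (r+u)"
      have "Fl r D (edge u w) d = (if d = u + w then 1 else 0) - (if d = u then 1 else 0)"
      proof (rule Fl_edge)
        show "r + u \<in> Sgrid" by (rule ru)
        show "u \<in> D" using u D by simp
        show "u + w \<in> D" using w D by simp
        show "w \<in> Nb (r + u)" by (rule w)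
      qed
      then show "P (r+u) (r+u+w) * Fl r D (edge u w) d = P (r+u) (r+u+w) * ((if d = u + w then 1 else 0) - (if d = u then 1 else 0))"
        by simp
    qed
    also have "\<dots> = (\<Sum>w\<in>Nb (r+u). if d - u = w then P (r+u) (r+u+w) else 0) - (if d = u then 1 else 0) * (\<Sum>w\<in>Nb (r+u). P (r+u) (r+u+w))"
    proof -
      have e: "\<And>w. (d - u = w) = (d = u + w)"
        by (metis add_diff_cancel_left' diff_add_cancel add.commute)
      show ?thesis unfolding sum_lin2 e ..
    qed
    also have "\<dots> = P (r+u) (r+d) - (if d = u then 1 else 0)"
    proof -
      have "(\<Sum>w\<in>Nb (r+u). if d - u = w then P (r+u) (r+u+w) else 0) = P (r+u) (r+d)"
      proof (cases "d - u \<in> Nb (r+u)")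
        case True
        have "r + u + (d - u) = r + d" by (simp add: algebra_simps)
        then show ?thesis using True by (simp add: sum.delta' finite_Nb)
      next
        case False
        have "(r + d) - (r + u) = d - u" by simp
        then have "P (r+u) (r+d) = 0" using tm_zero[OF tm ru, of "r+d"] False by simp
        then show ?thesis using False by (simp add: sum.delta' finite_Nb)
      qed
      then show ?thesis using tm_sum[OF tm ru] by simp
    qed
    finally show ?thesis .
  qed
  define A where "A = (\<lambda>d v. \<Sum>a\<in>Nb r. P r (r+a) * edge a (-a) d v)"
  define B where "B = edge 0 u"
  define C where "C = (\<lambda>d v. \<Sum>w\<in>Nb (r+u). P (r+u) (r+u+w) * edge u w d v)"
  have W: "wit P r u = (\<lambda>d v. (\<lambda>d v. A d v + B d v) d v + C d v)"
    unfolding wit_def A_def B_def C_def by simp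
  have "Fl r D (wit P r u) d = Fl r D (\<lambda>d v. A d v + B d v) d + Fl r D C d"
    unfolding W by (rule Fl_add)
  also have "\<dots> = Fl r D A d + Fl r D B d + Fl r D C d"
    by (simp only: Fl_add)
  finally have F: "Fl r D (wit P r u) d = Fl r D A d + Fl r D B d + Fl r D C d" .
  show ?thesis using F S1[folded A_def] S2[folded B_def] S3[folded C_def] by linarith
qed



lemma rep_prop:
  assumes "z ` Sgrid = J" "j \<in> J"
  shows "rep z j \<in> Sgrid \<and> z (rep z j) = j"
proof -
  have "\<exists>x. x \<in> Sgrid \<and> z x = j" using assms by blast
  from someI_ex[OF this] show ?thesis unfolding rep_def .
qed

lemma P_cong:
  assumes tm: "transition_matrix P" and pc: "is_partition K c" and hom: "homogeneous P c"
    and x: "x \<in> Sgrid" and y: "y \<in> Sgrid" and cxy: "c x = c y"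
  shows "P x (x + e) = P y (y + e)"
proof (cases "e \<in> Nb x")
  case True
  then show ?thesis using hom x y cxy unfolding homogeneous_def by blast
next
  case False
  have "Nb x = Nb y" using pc x y cxy unfolding is_partition_def by blast
  then have "e \<notin> Nb y" using False by simp
  then show ?thesis using tm_zero[OF tm x, of "x+e"] tm_zero[OF tm y, of "y+e"] False by simp
qed

lemma loc:
  assumes pc: "is_partition K c" and ref: "is_refinement c J z" and coh: "refinement_coherent c z"
    and n: "n \<in> Sgrid" and u: "u \<in> Nb n"
  defines "r \<equiv> rep z (z n)"
  shows "z n \<in> J \<and> r \<in> Sgrid \<and> z r = z n \<and> Nb r = Nb n \<and> c r = c n \<and>
     Njd z (z n) u = Nb n \<union> (\<lambda>w. u + w) ` Nb (n + u) \<and>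
     (\<forall>d \<in> Njd z (z n) u. n + d \<in> Sgrid \<and> r + d \<in> Sgrid \<and> c (r + d) = c (n + d) \<and> Nb (r + d) = Nb (n + d))"
proof -
  have pz: "is_partition J z" using ref unfolding is_refinement_def by simp
  then have zS: "z ` Sgrid = J" unfolding is_partition_def by simp
  have j: "z n \<in> J" using zS n by blast
  have r: "r \<in> Sgrid" "z r = z n" using rep_prop[OF zS j] unfolding r_def by auto
  have Nr: "Nb r = Nb n" using pz r n unfolding is_partition_def by metis
  have zc: "\<And>w. w \<in> Nb n \<Longrightarrow> c (n + w) = c (r + w)"
    using ref n r unfolding is_refinement_def by metis
  have cr: "c r = c n" using zc[OF zero_Nb[OF n]] by simp
  have ru: "r + u \<in> Sgrid" "n + u \<in> Sgrid" using u Nr Nb_S by auto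
  have cru: "c (r + u) = c (n + u)" using zc[OF u] by simp
  have Nru: "Nb (r + u) = Nb (n + u)" using pc ru cru unfolding is_partition_def by metis
  have D: "Njd z (z n) u = Nb n \<union> (\<lambda>w. u + w) ` Nb (n + u)"
    unfolding Njd_def r_def[symmetric] Nr Nru ..
  have dd: "n + d \<in> Sgrid \<and> r + d \<in> Sgrid \<and> c (r + d) = c (n + d) \<and> Nb (r + d) = Nb (n + d)"
    if d: "d \<in> Njd z (z n) u" for d
  proof -
    have d': "d \<in> Nb n \<union> (\<lambda>w. u + w) ` Nb (n + u)" using d D by simp
    have S: "n + d \<in> Sgrid \<and> r + d \<in> Sgrid"
    proof (cases "d \<in> Nb n")
      case True
      then show ?thesis using Nr Nb_S by auto
    next
      case False
      then obtain w where w: "w \<in> Nb (n + u)" "d = u + w" using d' by auto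
      have "n + u + w \<in> Sgrid" "r + u + w \<in> Sgrid" using w Nru Nb_S by auto
      then show ?thesis using w by (simp add: add.assoc)
    qed
    have "c (n + d) = c (r + d)" using coh n r u d' unfolding refinement_coherent_def by metis
    moreover have "Nb (r + d) = Nb (n + d)" using pc S calculation unfolding is_partition_def by metis
    ultimately show ?thesis using S by simp
  qed
  show ?thesis using j r Nr cr D dd by blast
qed

theorem theorem3:
  fixes P :: "int^'m \<Rightarrow> int^'m \<Rightarrow> real"
    and K :: "'k set" and c :: "int^'m \<Rightarrow> 'k"
    and J :: "'j set" and z :: "int^'m \<Rightarrow> 'j"
  assumes "transition_matrix P"
    and "is_partition K c"
    and "homogeneous P c"
    and "is_refinement c J z"
    and "refinement_coherent c z"
  shows "finite (lp_vars z J) \<and> finite (lp_constraints z J) \<and>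
         (\<exists>\<phi>. lp_feasible P z J \<phi>) \<and>
         (\<forall>\<phi>. lp_optimal P z J \<phi> \<longrightarrow>
            (\<forall>n\<in>Sgrid. \<forall>m\<in>Sgrid. \<forall>u\<in>Nb n. \<forall>v\<in>Nb m. 0 \<le> phi_of z \<phi> n u m v) \<and>
            (\<forall>n\<in>Sgrid. \<forall>m\<in>Sgrid. \<forall>u\<in>Nb n.
               (\<Sum>v\<in>Nb m. phi_of z \<phi> n u (m + v) (- v) - phi_of z \<phi> n u m v)
               = P (n + u) m - P n m))"
proof -
  note tm = assms(1) and pc = assms(2) and hom = assms(3) and ref = assms(4) and coh = assms(5)
  have pz: "is_partition J z" using ref unfolding is_refinement_def by simp
  then have finJ: "finite J" and zS: "z ` Sgrid = J" unfolding is_partition_def by auto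
  define U where "U = (unitbox :: (int^'m) set)"
  have finU: "finite U" unfolding U_def by (rule finite_unitbox)
  have "lp_vars z J \<subseteq> J \<times> U \<times> (U \<union> (\<lambda>(u, w). u + w) ` (U \<times> U)) \<times> U"
  proof
    fix x assume x: "x \<in> lp_vars z J"
    then obtain j u d v where xe: "x = (j, u, d, v)" and j: "j \<in> J" and u: "u \<in> Nb (rep z j)"
      and d: "d \<in> Njd z j u" and v: "v \<in> Nb (rep z j + d)"
      unfolding lp_vars_def by blast
    have "d \<in> U \<union> (\<lambda>(u, w). u + w) ` (U \<times> U)"
    proof (cases "d \<in> Nb (rep z j)")
      case True then show ?thesis using Nb_sub unfolding U_def by blast
    next
      case False
      then obtain w where "w \<in> Nb (rep z j + u)" "d = u + w" using d unfolding Njd_def by blast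
      then have "d = (\<lambda>(u, w). u + w) (u, w)" "(u, w) \<in> U \<times> U" using u Nb_sub unfolding U_def by auto
      then show ?thesis by blast
    qed
    then show "x \<in> J \<times> U \<times> (U \<union> (\<lambda>(u, w). u + w) ` (U \<times> U)) \<times> U"
      using xe j u v Nb_sub unfolding U_def by blast
  qed
  moreover have "finite (J \<times> U \<times> (U \<union> (\<lambda>(u, w). u + w) ` (U \<times> U)) \<times> U)"
    using finJ finU by simp
  ultimately have F1: "finite (lp_vars z J)" by (rule finite_subset)
  have "lp_constraints z J = (\<lambda>(j, u, d, v). (j, u, d)) ` lp_vars z J"
  proof
    show "lp_constraints z J \<subseteq> (\<lambda>(j, u, d, v). (j, u, d)) ` lp_vars z J"
    proof
      fix x assume "x \<in> lp_constraints z J"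
      then obtain j u d where xe: "x = (j, u, d)" and j: "j \<in> J" and u: "u \<in> Nb (rep z j)"
        and d: "d \<in> Njd z j u" unfolding lp_constraints_def by blast
      have r: "rep z j \<in> Sgrid" "z (rep z j) = j" using rep_prop[OF zS j] by auto
      have "rep z j + d \<in> Sgrid"
      proof (cases "d \<in> Nb (rep z j)")
        case True then show ?thesis by (rule Nb_S)
      next
        case False
        then obtain w where "w \<in> Nb (rep z j + u)" "d = u + w" using d unfolding Njd_def by blast
        then show ?thesis using Nb_S by (metis add.assoc)
      qed
      then have "0 \<in> Nb (rep z j + d)" by (rule zero_Nb)
      then have "(j, u, d, 0) \<in> lp_vars z J" using j u d unfolding lp_vars_def by blast
      then show "x \<in> (\<lambda>(j, u, d, v). (j, u, d)) ` lp_vars z J" using xe by force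
    qed
    show "(\<lambda>(j, u, d, v). (j, u, d)) ` lp_vars z J \<subseteq> lp_constraints z J"
      unfolding lp_vars_def lp_constraints_def by auto
  qed
  then have F2: "finite (lp_constraints z J)" using F1 by simp
  define \<phi>0 where "\<phi>0 = (\<lambda>j u. wit P (rep z j) u)"
  have F3: "lp_feasible P z J \<phi>0"
    unfolding lp_feasible_def
  proof (intro conjI ballI)
    fix x assume "x \<in> lp_vars z J"
    then obtain j u d v where xe: "x = (j, u, d, v)" and j: "j \<in> J" and u: "u \<in> Nb (rep z j)"
      unfolding lp_vars_def by blast
    have r: "rep z j \<in> Sgrid" using rep_prop[OF zS j] by auto
    show "case x of (j, u, d, v) \<Rightarrow> 0 \<le> \<phi>0 j u d v"
      unfolding xe \<phi>0_def using wit_nonneg[OF tm r u] by simp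
  next
    fix x assume "x \<in> lp_constraints z J"
    then obtain j u d where xe: "x = (j, u, d)" and j: "j \<in> J" and u: "u \<in> Nb (rep z j)"
      unfolding lp_constraints_def by blast
    have r: "rep z j \<in> Sgrid" using rep_prop[OF zS j] by auto
    have "Fl (rep z j) (Njd z j u) (wit P (rep z j) u) d = P (rep z j + u) (rep z j + d) - P (rep z j) (rep z j + d)"
      by (rule wit_flow[OF tm r u]) (simp add: Njd_def)
    then show "case x of (j, u, d) \<Rightarrow>
         (\<Sum>v\<in>Nb (rep z j + d). (if d + v \<in> Njd z j u then 1 else 0) * (\<phi>0 j u (d + v) (- v) - \<phi>0 j u d v)) =
         P (rep z j + u) (rep z j + d) - P (rep z j) (rep z j + d)"
      unfolding xe \<phi>0_def Fl_def by simp
  qed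
  have F4: "(\<forall>n\<in>Sgrid. \<forall>m\<in>Sgrid. \<forall>u\<in>Nb n. \<forall>v\<in>Nb m. 0 \<le> phi_of z \<phi> n u m v) \<and>
            (\<forall>n\<in>Sgrid. \<forall>m\<in>Sgrid. \<forall>u\<in>Nb n.
               (\<Sum>v\<in>Nb m. phi_of z \<phi> n u (m + v) (- v) - phi_of z \<phi> n u m v)
               = P (n + u) m - P n m)"
    if opt: "lp_optimal P z J \<phi>" for \<phi>
  proof -
    have feas: "lp_feasible P z J \<phi>" using opt unfolding lp_optimal_def by simp
    have nonneg: "0 \<le> \<phi> j u d v" if "(j, u, d, v) \<in> lp_vars z J" for j u d v
      using feas that unfolding lp_feasible_def by fastforce
    have cons: "(\<Sum>v\<in>Nb (rep z j + d). (if d + v \<in> Njd z j u then 1 else 0) * (\<phi> j u (d + v) (- v) - \<phi> j u d v))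
        = P (rep z j + u) (rep z j + d) - P (rep z j) (rep z j + d)"
      if "(j, u, d) \<in> lp_constraints z J" for j u d
      using feas that unfolding lp_feasible_def by fastforce
    show ?thesis
    proof (intro conjI ballI)
      fix n m u v :: "int^'m" assume n: "n \<in> Sgrid" and m: "m \<in> Sgrid" and u: "u \<in> Nb n" and v: "v \<in> Nb m"
      note L = loc[of K c J z n u, OF pc ref coh n u]
      show "0 \<le> phi_of z \<phi> n u m v"
      proof (cases "m - n \<in> Njd z (z n) u \<and> m + v - n \<in> Njd z (z n) u")
        case True
        have "m = n + (m - n)" by simp
        then have "Nb (rep z (z n) + (m - n)) = Nb m" using L True by metis
        then have "(z n, u, m - n, v) \<in> lp_vars z J" using L True u v unfolding lp_vars_def by auto
        then show ?thesis using True nonneg unfolding phi_of_def by simp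
      qed (auto simp: phi_of_def)
    next
      fix n m u :: "int^'m" assume n: "n \<in> Sgrid" and m: "m \<in> Sgrid" and u: "u \<in> Nb n"
      note L = loc[of K c J z n u, OF pc ref coh n u]
      define r where "r = rep z (z n)"
      define D where "D = Njd z (z n) u"
      define d where "d = m - n"
      have md: "m = n + d" unfolding d_def by simp
      have r: "r \<in> Sgrid" "Nb r = Nb n" "c r = c n" using L unfolding r_def by auto
      have ru: "r + u \<in> Sgrid" "n + u \<in> Sgrid" using u r Nb_S by auto
      have cru: "c (r + u) = c (n + u)"
        using ref n r(1) u L unfolding is_refinement_def r_def by metis
      have D: "D = Nb n \<union> (\<lambda>w. u + w) ` Nb (n + u)" using L unfolding D_def by blast
      have e1: "\<And>v. m + v - n = d + v" "\<And>v. m + v + - v - n = d" unfolding md by (simp_all add: algebra_simps)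
      have e2: "m - n = d" unfolding d_def ..
      show "(\<Sum>v\<in>Nb m. phi_of z \<phi> n u (m + v) (- v) - phi_of z \<phi> n u m v) = P (n + u) m - P n m"
      proof (cases "d \<in> D")
        case True
        have dd: "n + d \<in> Sgrid" "r + d \<in> Sgrid" "Nb (r + d) = Nb (n + d)"
          using L True unfolding D_def r_def by auto
        have "(\<Sum>v\<in>Nb m. phi_of z \<phi> n u (m + v) (- v) - phi_of z \<phi> n u m v)
            = (\<Sum>v\<in>Nb (r + d). (if d + v \<in> D then 1 else 0) * (\<phi> (z n) u (d + v) (- v) - \<phi> (z n) u d v))"
          unfolding md dd(3) 
          by (rule sum.cong[OF refl]) (use True in \<open>simp add: phi_of_def e1[unfolded md] e2[unfolded md] D_def\<close>)
        also have "\<dots> = P (r + u) (r + d) - P r (r + d)"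
          unfolding D_def r_def
        proof (rule cons)
          have "z n \<in> J" "Nb (rep z (z n)) = Nb n" using L by auto
          then show "(z n, u, d) \<in> lp_constraints z J"
            using u True unfolding lp_constraints_def D_def by auto
        qed
        also have "\<dots> = P (n + u) (n + d) - P n (n + d)"
        proof -
          have "P r (r + d) = P n (n + d)" by (rule P_cong[OF tm pc hom r(1) n r(3)])
          moreover have "P (r + u) (r + u + (d - u)) = P (n + u) (n + u + (d - u))"
            by (rule P_cong[OF tm pc hom ru cru])
          moreover have "r + u + (d - u) = r + d" "n + u + (d - u) = n + d" by (simp_all add: algebra_simps)
          ultimately show ?thesis by simp
        qed
        finally show ?thesis unfolding md .
      next
        case False
        have "(\<Sum>v\<in>Nb m. phi_of z \<phi> n u (m + v) (- v) - phi_of z \<phi> n u m v) = 0"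
          by (rule sum.neutral) (use False in \<open>simp add: phi_of_def e1 e2 D_def\<close>)
        moreover have "P n m = 0"
        proof (rule tm_zero[OF tm n])
          show "m - n \<notin> Nb n" using False D e2 by simp
        qed
        moreover have "P (n + u) m = 0"
        proof (rule tm_zero[OF tm ru(2)])
          have "m - (n + u) = d - u" unfolding md by (simp add: algebra_simps)
          moreover have "d - u \<notin> Nb (n + u)"
          proof
            assume "d - u \<in> Nb (n + u)"
            then have "u + (d - u) \<in> D" using D by blast
            then show False using False by simp
          qed
          ultimately show "m - (n + u) \<notin> Nb (n + u)" by metis
        qed
        ultimately show ?thesis by simp
      qed
    qed
  qed
  show ?thesis using F1 F2 F3 F4 by blast
qed

end
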